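(* Let $n\ge2$ be an integer, and let $\mathcal S$ be the smallest collection of $(n+1)$-element sets of non-negative integers such that: (i) $\{j,j+1,\dots,j+n\}\in\mathcal S$ for each $j=0,1,\dots,n-2$; (ii) if $S\in\mathcal S$ then $2S:=\{2s: s\in S\}\in\mathcal S$; (iii) if $S,T\in\mathcal S$ satisfy $|S\cap T|=n$, then for each $a\in S\cap T$ the set $(S\cup T)\setminus\{a\}$ belongs to $\mathcal S$. Then $\{0,1,2,4,8,\dots,2^{n-1}\}\in\mathcal S$. *)

theory Defs
  imports Main
begin

text \<open>The smallest collection of sets of natural numbers closed under rules (i)-(iii).
  All its members automatically have exactly n+1 elements.\<close>
inductive_set SS :: "nat \<Rightarrow> nat set set" for n :: nat where
  base: "j \<le> n - 2 \<Longrightarrow> {j..j+n} \<in> SS n"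
| dbl: "S \<in> SS n \<Longrightarrow> (\<lambda>s. 2 * s) ` S \<in> SS n"
| merge: "S \<in> SS n \<Longrightarrow> T \<in> SS n \<Longrightarrow> card (S \<inter> T) = n \<Longrightarrow> a \<in> S \<inter> T
           \<Longrightarrow> (S \<union> T) - {a} \<in> SS n"

end

theory Submission
  imports Defs
begin

definition compl :: "nat \<Rightarrow> nat set \<Rightarrow> bool" where
  "compl n V \<longleftrightarrow> (\<forall>X. X \<subseteq> V \<longrightarrow> card X = Suc n \<longrightarrow> X \<in> SS n)"

lemma ext_step:
  assumes cV: "compl n V" and xV: "x \<notin> V"
    and X: "X \<subseteq> insert x V" "card X = Suc n" "x \<in> X"
  shows "S0 \<in> SS n \<Longrightarrow> x \<in> S0 \<Longrightarrow> S0 \<subseteq> insert x V \<Longrightarrow> card S0 = Suc n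
     \<Longrightarrow> X \<in> SS n"
proof (induction "card (X - S0)" arbitrary: S0 rule: less_induct)
  case (less S0)
  have fX: "finite X" using X(2) card.infinite by fastforce
  have fS: "finite S0" using less.prems(4) card.infinite by fastforce
  show ?case
  proof (cases "X - S0 = {}")
    case True
    then have "X \<subseteq> S0" by blast
    then have "X = S0" using card_subset_eq fS less.prems X by metis
    then show ?thesis using less.prems by simp
  next
    case False
    then obtain z where z: "z \<in> X" "z \<notin> S0" by blast
    have "S0 \<noteq> X" using z by blast
    have "\<not> S0 \<subseteq> X"
    proof
      assume "S0 \<subseteq> X"
      then have "S0 = X" using card_subset_eq fX less.prems X by metis
      then show False using \<open>S0 \<noteq> X\<close> by simp
    qed
    then obtain y where y: "y \<in> S0" "y \<notin> X" by blast
    have yx: "y \<noteq> x" using y less.prems X by blast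
    have zx: "z \<noteq> x" using z less.prems X by blast
    define T where "T = insert z (S0 - {x})"
    have zV: "z \<in> V" using z zx X by blast
    have TV: "T \<subseteq> V" using less.prems(3) zV xV unfolding T_def by blast
    have cT: "card T = Suc n" unfolding T_def using fS z less.prems
      by (simp add: card_Diff_singleton)
    have TS: "T \<in> SS n" using cV TV cT unfolding compl_def by blast
    have inter: "S0 \<inter> T = S0 - {x}" unfolding T_def using z by blast
    have cI: "card (S0 \<inter> T) = n" using inter fS less.prems
      by (simp add: card_Diff_singleton)
    have "(S0 \<union> T) - {y} \<in> SS n"
      by (rule SS.merge[OF less.prems(1) TS cI]) (use inter y yx in blast)
    moreover have S1: "(S0 \<union> T) - {y} = insert z S0 - {y}" unfolding T_def using less.prems by blast
    ultimately have S1SS: "insert z S0 - {y} \<in> SS n" by simp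
    have cS1: "card (insert z S0 - {y}) = Suc n" using fS z y less.prems
      by (simp add: card_Diff_singleton)
    have sub: "insert z S0 - {y} \<subseteq> insert x V" using less.prems zV by blast
    have xin: "x \<in> insert z S0 - {y}" using less.prems yx by blast
    have "X - (insert z S0 - {y}) \<subset> X - S0" using z y by blast
    then have lt: "card (X - (insert z S0 - {y})) < card (X - S0)"
      using fX by (meson finite_Diff psubset_card_mono)
    show ?thesis by (rule less.hyps[OF lt S1SS xin sub cS1])
  qed
qed

lemma ext:
  assumes cV: "compl n V" and S0: "S0 \<in> SS n" "x \<in> S0" "S0 \<subseteq> insert x V" "card S0 = Suc n"
  shows "compl n (insert x V)"
proof (cases "x \<in> V")
  case True then show ?thesis using cV by (simp add: insert_absorb)
next
  case False
  show ?thesis unfolding compl_def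
  proof (intro allI impI)
    fix X assume X: "X \<subseteq> insert x V" "card X = Suc n"
    show "X \<in> SS n"
    proof (cases "x \<in> X")
      case True
      show ?thesis by (rule ext_step[OF cV False X True S0])
    next
      case False
      then have "X \<subseteq> V" using X by blast
      then show ?thesis using cV X unfolding compl_def by blast
    qed
  qed
qed

lemma union_compl:
  assumes cV: "compl n V" and cV': "compl n V'" and fV': "finite V'"
    and ci: "card (V \<inter> V') \<ge> n" and n: "n \<ge> 1"
  shows "compl n (V \<union> V')"
proof -
  have "\<And>F. finite F \<Longrightarrow> F \<subseteq> V' \<Longrightarrow> compl n (V \<union> F)"
  proof -
    fix F :: "nat set" assume "finite F" "F \<subseteq> V'"
    then show "compl n (V \<union> F)"
    proof (induction F rule: finite_induct)
      case empty then show ?case using cV by simp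
    next
      case (insert x F)
      then have IH: "compl n (V \<union> F)" by blast
      obtain A where A: "A \<subseteq> V \<inter> V'" "card A = n" using ci obtain_subset_with_card_n by metis
      have fA: "finite A" using A n card.infinite by fastforce
      show ?case
      proof (cases "x \<in> V")
        case True
        then have "V \<union> insert x F = V \<union> F" by blast
        then show ?thesis using IH by simp
      next
        case False
        have xA: "x \<notin> A" using A False by blast
        have S0V': "insert x A \<subseteq> V'" using A insert.prems by blast
        have cS0: "card (insert x A) = Suc n" using fA xA A by simp
        have S0: "insert x A \<in> SS n" using cV' S0V' cS0 unfolding compl_def by blast
        have "compl n (insert x (V \<union> F))"
          by (rule ext[OF IH S0 _ _ cS0]) (use A in auto)
        then show ?thesis by simp
      qed
    qed
  qed
  then show ?thesis using fV' by blast
qed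

lemma dbl_compl:
  assumes "compl n V" shows "compl n ((\<lambda>s. 2 * s) ` V)"
  unfolding compl_def
proof (intro allI impI)
  fix X assume X: "X \<subseteq> (\<lambda>s. 2 * s) ` V" "card X = Suc n"
  define Y where "Y = {y \<in> V. 2 * y \<in> X}"
  have XY: "X = (\<lambda>s. 2 * s) ` Y" using X(1) unfolding Y_def by blast
  have "inj_on (\<lambda>s::nat. 2 * s) Y" by (simp add: inj_on_def)
  then have "card Y = Suc n" using X XY card_image by metis
  moreover have "Y \<subseteq> V" unfolding Y_def by blast
  ultimately have "Y \<in> SS n" using assms unfolding compl_def by blast
  then show "X \<in> SS n" using XY SS.dbl by simp
qed

lemma interval_compl:
  assumes "j \<le> n - 2" shows "compl n {j..j+n}"
  unfolding compl_def
proof (intro allI impI)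
  fix X assume X: "X \<subseteq> {j..j+n}" "card X = Suc n"
  then have "X = {j..j+n}" using card_subset_eq[of "{j..j+n}" X] by simp
  then show "X \<in> SS n" using SS.base assms by simp
qed

lemma W_compl:
  assumes n: "n \<ge> 2" shows "j \<le> n - 2 \<Longrightarrow> compl n {0..j+n}"
proof (induction j)
  case 0 then show ?case using interval_compl[of 0 n] by simp
next
  case (Suc j)
  have eq: "{0..Suc j + n} = {0..j+n} \<union> {Suc j..Suc j + n}" by auto
  have int: "{0..j+n} \<inter> {Suc j..Suc j + n} = {Suc j..j+n}" by auto
  show ?case unfolding eq
    by (rule union_compl) (use Suc interval_compl[of "Suc j" n] int n in auto)
qed

fun D :: "nat \<Rightarrow> nat \<Rightarrow> nat set" where
  "D n 0 = {0..2*n-2}"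
| "D n (Suc k) = {0..2*n-2} \<union> (\<lambda>s. 2 * s) ` D n k"

lemma D_sub: "{0..2*n-2} \<subseteq> D n k" by (cases k) auto

lemma D_fin: "finite (D n k)" by (induction k) auto

lemma D_compl: assumes n: "n \<ge> 2" shows "compl n (D n k)"
proof (induction k)
  case 0
  have "2*n-2 = (n-2)+n" using n by simp
  then show ?case using W_compl[OF n, of "n-2"] by simp
next
  case (Suc k)
  have e: "2*n-2 = (n-2)+n" using n by simp
  have c0: "compl n {0..2*n-2}"
    unfolding e using W_compl[OF n, of "n-2"] by simp
  have sub: "(\<lambda>i. 2 * i) ` {0..<n} \<subseteq> {0..2*n-2} \<inter> (\<lambda>s. 2 * s) ` D n k"
  proof
    fix y assume "y \<in> (\<lambda>i. 2 * i) ` {0..<n}"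
    then obtain i where i: "i < n" "y = 2 * i" by auto
    have "i \<le> 2*n-2" using i n by linarith
    then have "i \<in> D n k" using D_sub[of n k] by auto
    then show "y \<in> {0..2*n-2} \<inter> (\<lambda>s. 2 * s) ` D n k" using i by auto
  qed
  have "card ((\<lambda>i. 2 * i) ` {0..<n}) = n"
    by (subst card_image) (auto simp: inj_on_def)
  then have "card ({0..2*n-2} \<inter> (\<lambda>s. 2 * s) ` D n k) \<ge> n"
    using card_mono[OF _ sub] by (metis finite_Int finite_atLeastAtMost)
  then show ?case
    using union_compl[OF c0 dbl_compl[OF Suc.IH]] D_fin n by simp
qed

lemma pow_in_D: assumes n: "n \<ge> 2" shows "i \<le> k \<Longrightarrow> 2 ^ i \<in> D n k"
proof (induction k arbitrary: i)
  case 0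
  have "(1::nat) \<le> 2*n-2" using n by linarith
  then show ?case using 0 by simp
next
  case (Suc k)
  have o: "(1::nat) \<le> 2*n-2" using n by linarith
  show ?case
  proof (cases i)
    case 0 then show ?thesis using o by simp
  next
    case (Suc i')
    then have "2 ^ i' \<in> D n k" using Suc.IH Suc.prems by simp
    then show ?thesis using Suc by auto
  qed
qed

theorem lemma4:
  fixes n :: nat
  assumes "n \<ge> 2"
  shows "insert 0 ((\<lambda>i. 2 ^ i) ` {0..<n}) \<in> SS n"
proof -
  have sub: "insert 0 ((\<lambda>i. 2 ^ i) ` {0..<n}) \<subseteq> D n (n - 1)"
    using pow_in_D[OF assms, of _ "n-1"] D_sub[of n "n-1"] by auto
  have inj: "inj_on (\<lambda>i::nat. (2::nat) ^ i) {0..<n}" by (simp add: inj_on_def)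
  have "card (insert 0 ((\<lambda>i. (2::nat) ^ i) ` {0..<n})) = Suc n"
    using card_image[OF inj] by (subst card_insert_disjoint) auto
  then show ?thesis using D_compl[OF assms] sub unfolding compl_def by blast
qed

end
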